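(* No randomized (adaptive) priority algorithm for one-sided bipartite matching can achieve an approximation ratio better than $\frac{53}{54}$.
   Context: One-sided bipartite matching: the offline side's vertex names are known in advance; each online vertex corresponds to a data item consisting of its name together with its set of offline neighbours; when a data item is received the algorithm must irrevocably match that online vertex to an unmatched neighbour or leave it unmatched; the goal is a maximum-size matching. Adaptive priority model: before each step the algorithm specifies a total ordering $\pi$ of the universe of all possible data items (which may depend on previously received data items and decisions), and receives the remaining data item of the instance that comes first in $\pi$, then decides. A randomized priority algorithm may in addition use random bits in its orderings and decisions; its approximation ratio is $\inf_I \mathbb{E}[v(\mathbb{A},I)]/v(I)$, with $v(I)$ the maximum matching size. *)

theory Defs
  imports "HOL-Probability.Probability"
begin

text \<open>Vertex names are natural numbers (offline and online names live on
different sides, so reusing nat for both is harmless).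
A data item is a pair (online name, set of offline neighbours).\<close>

type_synonym item = "nat \<times> nat set"

text \<open>A history: the data items received so far with the decision taken
(None = left unmatched, Some u = matched to offline vertex u).\<close>

type_synonym hist = "(item \<times> nat option) list"

text \<open>A deterministic adaptive priority algorithm. Given the (known in
advance) set of offline vertices and the history, it specifies an ordering
(a relation on the universe of data items); given in addition the received
data item it makes a decision.\<close>

record palg =
  ord :: "nat set \<Rightarrow> hist \<Rightarrow> item rel"
  dec :: "nat set \<Rightarrow> hist \<Rightarrow> item \<Rightarrow> nat option"

definition wf_alg :: "palg \<Rightarrow> bool" where
  "wf_alg A \<longleftrightarrow> (\<forall>U h. linear_order_on UNIV (ord A U h))"

definition matched :: "hist \<Rightarrow> nat set" where
  "matched h = {u. \<exists>x. (x, Some u) \<in> set h}"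

definition first_in :: "item rel \<Rightarrow> item set \<Rightarrow> item" where
  "first_in p R = (THE x. x \<in> R \<and> (\<forall>y\<in>R. (x, y) \<in> p))"

text \<open>Effective decision: a decision that is not a currently unmatched
neighbour is treated as leaving the online vertex unmatched (matches are
thus always legal).\<close>

definition legal_dec :: "hist \<Rightarrow> item \<Rightarrow> nat option \<Rightarrow> nat option" where
  "legal_dec h x d = (case d of None \<Rightarrow> None
     | Some u \<Rightarrow> (if u \<in> snd x \<and> u \<notin> matched h then Some u else None))"

text \<open>Execution of an algorithm on offline set U, remaining data items R,
current history h; the fuel argument is the number of remaining steps.\<close>

fun run :: "palg \<Rightarrow> nat set \<Rightarrow> nat \<Rightarrow> item set \<Rightarrow> hist \<Rightarrow> hist" where
  "run A U 0 R h = h"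
| "run A U (Suc n) R h =
     (if R = {} then h else
       (let x = first_in (ord A U h) R;
            d = legal_dec h x (dec A U h x)
        in run A U n (R - {x}) (h @ [(x, d)])))"

definition alg_value :: "palg \<Rightarrow> nat set \<Rightarrow> item set \<Rightarrow> nat" where
  "alg_value A U D = length (filter (\<lambda>(x, d). d \<noteq> None) (run A U (card D) D []))"

definition is_instance :: "nat set \<Rightarrow> item set \<Rightarrow> bool" where
  "is_instance U D \<longleftrightarrow> finite U \<and> finite D \<and> inj_on fst D \<and> (\<forall>x\<in>D. snd x \<subseteq> U)"

definition edges :: "item set \<Rightarrow> (nat \<times> nat) set" where
  "edges D = {(v, u). \<exists>N. (v, N) \<in> D \<and> u \<in> N}"

definition is_matching :: "(nat \<times> nat) set \<Rightarrow> bool" where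
  "is_matching M \<longleftrightarrow> (\<forall>e\<in>M. \<forall>e'\<in>M. fst e = fst e' \<longleftrightarrow> snd e = snd e')"

definition opt :: "item set \<Rightarrow> nat" where
  "opt D = Max {card M | M. M \<subseteq> edges D \<and> is_matching M}"

text \<open>A randomized priority algorithm: a probability space M of random
choices and, for each outcome, a deterministic priority algorithm.\<close>

definition exp_value :: "'w measure \<Rightarrow> ('w \<Rightarrow> palg) \<Rightarrow> nat set \<Rightarrow> item set \<Rightarrow> real" where
  "exp_value M A U D = integral\<^sup>L M (\<lambda>w. real (alg_value (A w) U D))"

definition approx_ratio :: "'w measure \<Rightarrow> ('w \<Rightarrow> palg) \<Rightarrow> real" where
  "approx_ratio M A = (INF I \<in> {(U, D). is_instance U D \<and> opt D > 0}.
       exp_value M A (fst I) (snd I) / real (opt (snd I)))"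

definition randomized_priority_alg :: "'w measure \<Rightarrow> ('w \<Rightarrow> palg) \<Rightarrow> bool" where
  "randomized_priority_alg M A \<longleftrightarrow> prob_space M \<and> (\<forall>w\<in>space M. wf_alg (A w))
     \<and> (\<forall>U D. is_instance U D \<longrightarrow> (\<lambda>w. real (alg_value (A w) U D)) \<in> borel_measurable M)"

end

theory Submission
  imports Defs
begin

definition vs :: "hist \<Rightarrow> nat list" where
  "vs h = map (\<lambda>(x, d). the d) (filter (\<lambda>(x, d). d \<noteq> None) h)"

lemma vs_append[simp]: "vs (h @ [(x, d)]) = vs h @ (case d of None \<Rightarrow> [] | Some u \<Rightarrow> [u])"
  by (cases d) (auto simp: vs_def)

lemma matched_vs: "matched h = set (vs h)"
  unfolding matched_def vs_def by force

lemma legal_dec_Some: "legal_dec h x d = Some u \<Longrightarrow> u \<in> snd x \<and> u \<notin> matched h"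
  unfolding legal_dec_def by (cases d) (auto split: if_splits)

lemma min_exists:
  assumes lin: "linear_order_on UNIV p" and "finite R" "R \<noteq> {}"
  shows "\<exists>x\<in>R. \<forall>y\<in>R. (x, y) \<in> p"
  using assms(2,3)
proof (induction R rule: finite_ne_induct)
  case (singleton x)
  then show ?case using lin by (auto simp: linear_order_on_def partial_order_on_def preorder_on_def refl_on_def)
next
  case (insert x F)
  then obtain m where m: "m \<in> F" "\<forall>y\<in>F. (m, y) \<in> p" by blast
  have refl: "(x, x) \<in> p" using lin by (auto simp: linear_order_on_def partial_order_on_def preorder_on_def refl_on_def)
  have tr: "trans p" using lin by (auto simp: linear_order_on_def partial_order_on_def preorder_on_def)
  show ?case
  proof (cases "(x, m) \<in> p")
    case True
    have "\<forall>y\<in>insert x F. (x, y) \<in> p"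
    proof
      fix y assume "y \<in> insert x F"
      then show "(x, y) \<in> p"
      proof
        assume "y = x" then show ?thesis using refl by simp
      next
        assume "y \<in> F" then have "(m, y) \<in> p" using m by blast
        then show ?thesis using True tr by (meson transD)
      qed
    qed
    then show ?thesis by blast
  next
    case False
    have "m \<noteq> x" using m insert.hyps by blast
    with lin False have "(m, x) \<in> p"
      by (auto simp: linear_order_on_def total_on_def)
    then show ?thesis using m by auto
  qed
qed

lemma first_in_eq:
  assumes lin: "linear_order_on UNIV p" and "x \<in> R" "\<forall>y\<in>R. (x, y) \<in> p"
  shows "first_in p R = x"
  unfolding first_in_def
proof (rule the_equality)
  show "x \<in> R \<and> (\<forall>y\<in>R. (x, y) \<in> p)" using assms by auto
next
  fix z assume "z \<in> R \<and> (\<forall>y\<in>R. (z, y) \<in> p)"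
  then show "z = x"
  proof -
    have "antisym p" using lin by (auto simp: linear_order_on_def partial_order_on_def)
    then show ?thesis using assms \<open>z \<in> R \<and> _\<close> by (meson antisymD)
  qed
qed

lemma first_in_mem:
  assumes lin: "linear_order_on UNIV p" and "finite R" "R \<noteq> {}"
  shows "first_in p R \<in> R"
  using min_exists[OF assms] first_in_eq[OF lin] by metis

lemma run_struct:
  assumes "wf_alg B"
  shows "finite R \<Longrightarrow> \<exists>t. run B U n R h = h @ t \<and>
     (\<forall>(x, d)\<in>set t. x \<in> R \<and> (\<forall>u. d = Some u \<longrightarrow> u \<in> snd x))"
proof (induction n arbitrary: R h)
  case 0
  then show ?case by auto
next
  case (Suc n)
  show ?case
  proof (cases "R = {}")
    case True
    then show ?thesis by auto
  next
    case False
    define x where "x = first_in (ord B U h) R"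
    define d where "d = legal_dec h x (dec B U h x)"
    have xR: "x \<in> R" unfolding x_def using first_in_mem assms Suc.prems False
      by (auto simp: wf_alg_def)
    have dS: "\<forall>u. d = Some u \<longrightarrow> u \<in> snd x" using legal_dec_Some unfolding d_def by blast
    have fin: "finite (R - {x})" using Suc.prems by simp
    obtain t where t: "run B U n (R - {x}) (h @ [(x, d)]) = (h @ [(x, d)]) @ t"
      "\<forall>(z, e)\<in>set t. z \<in> R - {x} \<and> (\<forall>u. e = Some u \<longrightarrow> u \<in> snd z)"
      using Suc.IH[OF fin, of "h @ [(x, d)]"] by blast
    have "run B U (Suc n) R h = run B U n (R - {x}) (h @ [(x, d)])"
      using False by (simp add: x_def d_def Let_def)
    then show ?thesis using t xR dS
      by (intro exI[of _ "(x, d) # t"]) auto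
  qed
qed

lemma run_distinct:
  "distinct (vs h) \<Longrightarrow> distinct (vs (run B U n R h))"
proof (induction n arbitrary: R h)
  case 0
  then show ?case by simp
next
  case (Suc n)
  show ?case
  proof (cases "R = {}")
    case True then show ?thesis using Suc.prems by simp
  next
    case False
    define x where "x = first_in (ord B U h) R"
    define d where "d = legal_dec h x (dec B U h x)"
    have "distinct (vs (h @ [(x, d)]))"
      using Suc.prems legal_dec_Some[of h x "dec B U h x"] unfolding d_def[symmetric]
      by (cases d) (auto simp: matched_vs)
    then have "distinct (vs (run B U n (R - {x}) (h @ [(x, d)])))" by (rule Suc.IH)
    moreover have "run B U (Suc n) R h = run B U n (R - {x}) (h @ [(x, d)])"
      using False by (simp add: x_def d_def Let_def)
    ultimately show ?thesis by simp
  qed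
qed

lemma alg_value_vs: "alg_value B U D = length (vs (run B U (card D) D []))"
  unfolding alg_value_def vs_def by simp

definition U0 :: "nat set" where "U0 = {1,2,3}"
definition o1 :: "nat \<Rightarrow> nat" where "o1 n = n mod 3 + 1"
definition o2 :: "nat \<Rightarrow> nat" where "o2 n = (n + 1) mod 3 + 1"
definition Dn :: "nat \<times> nat \<times> nat \<times> nat \<Rightarrow> item set" where
  "Dn j = (case j of (n, p, q, r) \<Rightarrow> {(n, {p, q}), (o1 n, {q, r}), (o2 n, {q, r})})"
definition J :: "(nat \<times> nat \<times> nat \<times> nat) set" where
  "J = {(n, p, q, r). n \<in> U0 \<and> p \<in> U0 \<and> q \<in> U0 \<and> r \<in> U0 \<and> p \<noteq> q \<and> p \<noteq> r \<and> q \<noteq> r}"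
definition Y :: "item set" where "Y = U0 \<times> {{1,2},{1,3},{2,3}}"

lemma J_eq: "J = {1,2,3} \<times> {(1,2,3),(1,3,2),(2,1,3),(2,3,1),(3,1,2),(3,2,1)}"
proof (rule set_eqI)
  fix x :: "nat \<times> nat \<times> nat \<times> nat"
  obtain n p q r where x: "x = (n,p,q,r)" by (cases x) auto
  show "x \<in> J \<longleftrightarrow> x \<in> {1,2,3} \<times> {(1,2,3),(1,3,2),(2,1,3),(2,3,1),(3,1,2),(3,2,1)}"
    unfolding x J_def U0_def by (simp; presburger)
qed

lemma card_J: "card J = 18"
  unfolding J_eq by (simp add: card_cartesian_product)

lemma finite_J: "finite J"
  unfolding J_eq by simp

lemma oth: "n \<in> U0 \<Longrightarrow> o1 n \<in> U0 \<and> o2 n \<in> U0 \<and> n \<noteq> o1 n \<and> n \<noteq> o2 n \<and> o1 n \<noteq> o2 n"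
  unfolding U0_def o1_def o2_def by auto

lemma pair_in: "p \<in> U0 \<Longrightarrow> q \<in> U0 \<Longrightarrow> p \<noteq> q \<Longrightarrow> {p, q} \<in> {{1,2},{1,3},{2,3::nat}}"
  unfolding U0_def by (auto simp: insert_commute)

lemma Dn_sub_Y: "j \<in> J \<Longrightarrow> Dn j \<subseteq> Y"
proof -
  assume j: "j \<in> J"
  then obtain n p q r where jj: "j = (n,p,q,r)" and h: "n \<in> U0" "p \<in> U0" "q \<in> U0" "r \<in> U0" "p \<noteq> q" "p \<noteq> r" "q \<noteq> r"
    unfolding J_def by auto
  show ?thesis using h(1) oth[OF h(1)] pair_in[OF h(2,3,5)] pair_in[OF h(3,4,7)]
    unfolding Dn_def jj Y_def by auto
qed

lemma Dn_inst: "j \<in> J \<Longrightarrow> is_instance U0 (Dn j)"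
  unfolding is_instance_def
proof (intro conjI)
  assume j: "j \<in> J"
  then obtain n p q r where jj: "j = (n,p,q,r)" and h: "n \<in> U0" "p \<in> U0" "q \<in> U0" "r \<in> U0" "p \<noteq> q" "p \<noteq> r" "q \<noteq> r"
    unfolding J_def by auto
  show "finite U0" by (simp add: U0_def)
  show "finite (Dn j)" by (simp add: Dn_def jj)
  show "inj_on fst (Dn j)" using oth[OF h(1)] by (auto simp: Dn_def jj inj_on_def)
  show "\<forall>x\<in>Dn j. snd x \<subseteq> U0" using h by (auto simp: Dn_def jj)
qed

lemma Dn_opt: "j \<in> J \<Longrightarrow> opt (Dn j) \<ge> 3"
proof -
  assume j: "j \<in> J"
  then obtain n p q r where jj: "j = (n,p,q,r)" and h: "n \<in> U0" "p \<in> U0" "q \<in> U0" "r \<in> U0" "p \<noteq> q" "p \<noteq> r" "q \<noteq> r"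
    unfolding J_def by auto
  note o = oth[OF h(1)]
  define Mt where "Mt = {(n, p), (o1 n, q), (o2 n, r)}"
  have e: "Mt \<subseteq> edges (Dn j)" unfolding Mt_def edges_def Dn_def jj by auto
  have m: "is_matching Mt" unfolding Mt_def is_matching_def using o h by auto
  have c: "card Mt = 3" unfolding Mt_def using o h by auto
  have ed: "edges (Dn j) \<subseteq> U0 \<times> U0" using o h unfolding edges_def Dn_def jj by auto
  have fin: "finite {card M | M. M \<subseteq> edges (Dn j) \<and> is_matching M}"
  proof (rule finite_subset[of _ "{..card (U0 \<times> U0)}"])
    show "{card M | M. M \<subseteq> edges (Dn j) \<and> is_matching M} \<subseteq> {..card (U0 \<times> U0)}"
    proof
      fix k assume "k \<in> {card M | M. M \<subseteq> edges (Dn j) \<and> is_matching M}"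
      then obtain M where "k = card M" "M \<subseteq> U0 \<times> U0" using ed by blast
      moreover have "finite (U0 \<times> U0)" by (simp add: U0_def)
      ultimately show "k \<in> {..card (U0 \<times> U0)}" using card_mono by auto
    qed
  qed simp
  have "3 \<in> {card M | M. M \<subseteq> edges (Dn j) \<and> is_matching M}" using e m c by force
  then show ?thesis unfolding opt_def using fin by (simp add: Max_ge)
qed

lemma vs_mem: "u \<in> set (vs h) \<longleftrightarrow> (\<exists>x. (x, Some u) \<in> set h)"
  using matched_vs[of h] unfolding matched_def by blast

lemma Dn_finite: "finite (Dn j)"
  by (cases j) (auto simp: Dn_def)

lemma le3:
  assumes wf: "wf_alg B" and j: "j \<in> J"
  shows "alg_value B U0 (Dn j) \<le> 3"
proof -
  define H where "H = run B U0 (card (Dn j)) (Dn j) []"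
  obtain t where t: "H = [] @ t" "\<forall>(x, d)\<in>set t. x \<in> Dn j \<and> (\<forall>u. d = Some u \<longrightarrow> u \<in> snd x)"
    using run_struct[OF wf Dn_finite] unfolding H_def by blast
  have sub: "set (vs H) \<subseteq> U0"
  proof
    fix u assume "u \<in> set (vs H)"
    then obtain x where "(x, Some u) \<in> set t" using vs_mem t(1) by auto
    then have "x \<in> Dn j" "u \<in> snd x" using t(2) by auto
    then show "u \<in> U0" using Dn_inst[OF j] unfolding is_instance_def by auto
  qed
  have "distinct (vs H)" unfolding H_def by (rule run_distinct) (simp add: vs_def)
  then have "length (vs H) = card (set (vs H))" by (simp add: distinct_card)
  also have "\<dots> \<le> card U0" using sub by (intro card_mono) (auto simp: U0_def)
  finally show ?thesis by (simp add: alg_value_vs H_def U0_def)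
qed

lemma fail:
  assumes wf: "wf_alg B" and j: "(n, p, q, r) \<in> J"
    and mn: "\<forall>z\<in>Dn (n, p, q, r). ((n, {p, q}), z) \<in> ord B U0 []"
    and dq: "legal_dec [] (n, {p, q}) (dec B U0 [] (n, {p, q})) \<in> {None, Some q}"
  shows "alg_value B U0 (Dn (n, p, q, r)) \<le> 2"
proof -
  define D where "D = Dn (n, p, q, r)"
  define y where "y = (n, {p, q})"
  define d where "d = legal_dec [] y (dec B U0 [] y)"
  have yD: "y \<in> D" unfolding D_def y_def Dn_def by simp
  have lin: "linear_order_on UNIV (ord B U0 [])" using wf by (simp add: wf_alg_def)
  have fy: "first_in (ord B U0 []) D = y"
    using first_in_eq[OF lin yD] mn unfolding D_def y_def by blast
  obtain k where k: "card D = Suc k"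
    using yD Dn_finite[of "(n,p,q,r)"] unfolding D_def by (metis card_0_eq empty_iff not0_implies_Suc)
  have "run B U0 (card D) D [] = run B U0 k (D - {y}) [(y, d)]"
    using yD fy by (auto simp: k d_def Let_def)
  moreover obtain t where t: "run B U0 k (D - {y}) [(y, d)] = [(y, d)] @ t"
    "\<forall>(x, e)\<in>set t. x \<in> D - {y} \<and> (\<forall>u. e = Some u \<longrightarrow> u \<in> snd x)"
    using run_struct[OF wf, of "D - {y}" U0 k "[(y, d)]"] Dn_finite unfolding D_def by blast
  ultimately have H: "run B U0 (card D) D [] = (y, d) # t" by simp
  have oth_snd: "\<And>x. x \<in> D - {y} \<Longrightarrow> snd x = {q, r}" unfolding D_def y_def Dn_def by auto
  have sub: "set (vs ((y, d) # t)) \<subseteq> {q, r}"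
  proof
    fix u assume "u \<in> set (vs ((y, d) # t))"
    then obtain x where x: "(x, Some u) \<in> set ((y, d) # t)" using vs_mem by blast
    show "u \<in> {q, r}"
    proof (cases "(x, Some u) = (y, d)")
      case True then show ?thesis using dq unfolding d_def y_def by auto
    next
      case False
      then have "(x, Some u) \<in> set t" using x by auto
      then show ?thesis using t(2) oth_snd by fastforce
    qed
  qed
  have "distinct (vs (run B U0 (card D) D []))" by (rule run_distinct) (simp add: vs_def)
  then have "length (vs ((y, d) # t)) = card (set (vs ((y, d) # t)))"
    using H by (simp add: distinct_card)
  also have "\<dots> \<le> card {q, r}" using sub by (intro card_mono) auto
  also have "\<dots> \<le> 2" by (simp add: card_insert_le_m1)
  finally show ?thesis using H by (simp add: alg_value_vs D_def)
qed

lemma Y_cases: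
  assumes "y \<in> Y"
  shows "\<exists>n p q r. (n, p, q, r) \<in> J \<and> y = (n, {p, q})"
proof -
  obtain n X where y: "y = (n, X)" "n \<in> U0" "X \<in> {{1,2},{1,3},{2,3}}" using assms unfolding Y_def by auto
  have "\<exists>p q r. (n, p, q, r) \<in> J \<and> X = {p, q}"
  proof -
    from y(3) consider "X = {1,2}" | "X = {1,3}" | "X = {2,3}" by blast
    then show ?thesis
    proof cases
      case 1
      have "(n, 1, 2, 3) \<in> J" using y(2) by (simp add: J_def U0_def)
      then show ?thesis using 1 by blast
    next
      case 2
      have "(n, 1, 3, 2) \<in> J" using y(2) by (simp add: J_def U0_def)
      then show ?thesis using 2 by blast
    next
      case 3
      have "(n, 2, 3, 1) \<in> J" using y(2) by (simp add: J_def U0_def)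
      then show ?thesis using 3 by blast
    qed
  qed
  then show ?thesis using y by blast
qed

lemma some_fail:
  assumes wf: "wf_alg B"
  shows "\<exists>j\<in>J. alg_value B U0 (Dn j) \<le> 2"
proof -
  have lin: "linear_order_on UNIV (ord B U0 [])" using wf by (simp add: wf_alg_def)
  have "finite Y" "Y \<noteq> {}" unfolding Y_def U0_def by auto
  then obtain y where yY: "y \<in> Y" and mn: "\<forall>z\<in>Y. (y, z) \<in> ord B U0 []"
    using min_exists[OF lin] by blast
  obtain n p q r where j: "(n, p, q, r) \<in> J" and y: "y = (n, {p, q})" using Y_cases[OF yY] by blast
  have j': "(n, q, p, r) \<in> J" using j unfolding J_def by auto
  have y': "y = (n, {q, p})" using y by (simp add: insert_commute)
  define d where "d = legal_dec [] y (dec B U0 [] y)"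
  have dS: "\<forall>u. d = Some u \<longrightarrow> u \<in> {p, q}" using legal_dec_Some unfolding d_def y by fastforce
  have m1: "\<forall>z\<in>Dn (n, p, q, r). ((n, {p, q}), z) \<in> ord B U0 []"
    using mn Dn_sub_Y[OF j] y by blast
  have m2: "\<forall>z\<in>Dn (n, q, p, r). ((n, {q, p}), z) \<in> ord B U0 []"
    using mn Dn_sub_Y[OF j'] y' by blast
  show ?thesis
  proof (cases "d = Some p")
    case True
    then have "legal_dec [] (n, {q, p}) (dec B U0 [] (n, {q, p})) \<in> {None, Some p}"
      using d_def y' by simp
    then show ?thesis using fail[OF wf j' m2] j' by blast
  next
    case False
    then have "d \<in> {None, Some q}" using dS by (cases d) auto
    then have "legal_dec [] (n, {p, q}) (dec B U0 [] (n, {p, q})) \<in> {None, Some q}"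
      using d_def y by simp
    then show ?thesis using fail[OF wf j m1] j by blast
  qed
qed

lemma sum_le:
  assumes wf: "wf_alg B"
  shows "(\<Sum>j\<in>J. alg_value B U0 (Dn j)) \<le> 53"
proof -
  obtain j0 where j0: "j0 \<in> J" "alg_value B U0 (Dn j0) \<le> 2" using some_fail[OF wf] by blast
  have "(\<Sum>j\<in>J. alg_value B U0 (Dn j)) = alg_value B U0 (Dn j0) + (\<Sum>j\<in>J - {j0}. alg_value B U0 (Dn j))"
    using j0 finite_J by (simp add: sum.remove)
  also have "(\<Sum>j\<in>J - {j0}. alg_value B U0 (Dn j)) \<le> (\<Sum>j\<in>J - {j0}. 3)"
    by (rule sum_mono) (use le3[OF wf] in auto)
  also have "(\<Sum>j\<in>J - {j0}. (3::nat)) = card (J - {j0}) * 3" by simp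
  also have "card (J - {j0}) = 17" using j0 card_J finite_J by simp
  finally show ?thesis using j0 by simp
qed

theorem theorem8:
  fixes M :: "'w measure" and A :: "'w \<Rightarrow> palg"
  assumes "randomized_priority_alg M A"
  shows "approx_ratio M A \<le> 53 / 54"
proof -
  interpret prob_space M using assms by (simp add: randomized_priority_alg_def)
  have wf: "\<And>w. w \<in> space M \<Longrightarrow> wf_alg (A w)" using assms by (simp add: randomized_priority_alg_def)
  have meas: "\<And>j. j \<in> J \<Longrightarrow> (\<lambda>w. real (alg_value (A w) U0 (Dn j))) \<in> borel_measurable M"
    using assms Dn_inst by (simp add: randomized_priority_alg_def)
  have int: "\<And>j. j \<in> J \<Longrightarrow> integrable M (\<lambda>w. real (alg_value (A w) U0 (Dn j)))"
  proof -
    fix j assume j: "j \<in> J"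
    show "integrable M (\<lambda>w. real (alg_value (A w) U0 (Dn j)))"
      by (rule integrable_const_bound[where B=3]) (use le3[OF wf j] meas[OF j] in auto)
  qed
  have "(\<Sum>j\<in>J. exp_value M A U0 (Dn j)) = integral\<^sup>L M (\<lambda>w. \<Sum>j\<in>J. real (alg_value (A w) U0 (Dn j)))"
    unfolding exp_value_def using int by (simp add: integral_sum)
  also have "\<dots> \<le> 53"
  proof (rule integral_le_const)
    show "integrable M (\<lambda>w. \<Sum>j\<in>J. real (alg_value (A w) U0 (Dn j)))" using int by auto
    show "AE w in M. (\<Sum>j\<in>J. real (alg_value (A w) U0 (Dn j))) \<le> 53"
    proof (rule AE_I2)
      fix w assume "w \<in> space M"
      then have "(\<Sum>j\<in>J. alg_value (A w) U0 (Dn j)) \<le> 53" using sum_le wf by blast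
      then show "(\<Sum>j\<in>J. real (alg_value (A w) U0 (Dn j))) \<le> 53"
      proof -
        have "real (\<Sum>j\<in>J. alg_value (A w) U0 (Dn j)) \<le> 53" using \<open>_ \<le> 53\<close>
          by (simp only: of_nat_le_iff[symmetric, where 'a=real])
        then show ?thesis by (simp only: of_nat_sum)
      qed
    qed
  qed
  finally have S: "(\<Sum>j\<in>J. exp_value M A U0 (Dn j)) \<le> 53" .
  obtain j where j: "j \<in> J" and ej: "exp_value M A U0 (Dn j) \<le> 53 / 18"
  proof (rule ccontr)
    assume "\<not> thesis"
    then have "\<forall>j\<in>J. exp_value M A U0 (Dn j) > 53 / 18" using that by force
    then have "(\<Sum>j\<in>J. (53 / 18 :: real)) < (\<Sum>j\<in>J. exp_value M A U0 (Dn j))"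
      using finite_J card_J by (intro sum_strict_mono) auto
    then show False using S card_J by simp
  qed
  have o3: "real (opt (Dn j)) \<ge> 3" using Dn_opt[OF j] by simp
  have mem: "(U0, Dn j) \<in> {(U, D). is_instance U D \<and> opt D > 0}"
    using Dn_inst[OF j] Dn_opt[OF j] by auto
  have bdd: "bdd_below ((\<lambda>I. exp_value M A (fst I) (snd I) / real (opt (snd I))) ` {(U, D). is_instance U D \<and> opt D > 0})"
    by (rule bdd_belowI[where m=0]) (auto simp: exp_value_def)
  have "approx_ratio M A \<le> exp_value M A U0 (Dn j) / real (opt (Dn j))"
    unfolding approx_ratio_def using cINF_lower[OF bdd mem] by simp
  also have "\<dots> \<le> (53 / 18) / real (opt (Dn j))"
    using ej o3 by (intro divide_right_mono) auto
  also have "\<dots> \<le> (53 / 18) / 3" using o3 by (intro divide_left_mono) auto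
  finally show ?thesis by simp
qed

end
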